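(* Let $P \subseteq \mathbb{R}^7$ be an associative $3$-plane. Then $\Theta(P) \cap \Lambda^2_7 = P\lrcorner\varphi := \{u\lrcorner\varphi : u \in P\}$.
   Context: Equip $\mathbb{R}^7$ with its standard inner product, orientation and basis. Let $\varphi = e_{123} - e_{167} - e_{527} - e_{563} - e_{415} - e_{426} - e_{437}$ ($e_{ijk} = e_i\wedge e_j\wedge e_k$), $\psi = \star\varphi = e_{4567} - e_{4523} - e_{4163} - e_{4127} - e_{2637} - e_{1537} - e_{1526}$, and define $\times$ by $\langle u \times v, w \rangle = \varphi(u,v,w)$. A $3$-dimensional subspace is associative if closed under $\times$. For $u,v$: $u\wedge v$ is the 2-form $(a,b)\mapsto \langle u,a\rangle\langle v,b\rangle - \langle u,b\rangle\langle v,a\rangle$; $u\lrcorner\varphi$ is the 2-form $(a,b)\mapsto \varphi(u,a,b)$; $\Psi_{uv}$ is the 2-form $(a,b)\mapsto\psi(u,v,a,b)$. $\Lambda^2_7 = \{u\lrcorner\varphi : u\in\mathbb{R}^7\}$. $\Theta(P) = \Lambda^2(P)\oplus\Psi(P)$ with $\Lambda^2(P) = \mathrm{Span}\{u\wedge v: u,v\in P\}$, $\Psi(P) = \mathrm{Span}\{\Psi_{uv} : u,v\in P\}$. *)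

theory Defs
  imports "HOL-Analysis.Analysis"
begin

type_synonym vec7 = "real ^ 7"
type_synonym form2 = "vec7 \<Rightarrow> vec7 \<Rightarrow> real"

text \<open>Index i in 1..7 of the standard basis, as an element of the index type 7.\<close>
definition ix :: "nat \<Rightarrow> 7" where "ix i = of_nat (i - 1)"

definition c :: "vec7 \<Rightarrow> nat \<Rightarrow> real" where "c x i = x $ ix i"

text \<open>e_{ijk}(u,v,w) = det of the 3x3 minor (standard convention for wedges of dual basis covectors).\<close>
definition e3 :: "nat \<Rightarrow> nat \<Rightarrow> nat \<Rightarrow> vec7 \<Rightarrow> vec7 \<Rightarrow> vec7 \<Rightarrow> real" where
  "e3 i j k u v w =
     c u i * (c v j * c w k - c v k * c w j)
   - c u j * (c v i * c w k - c v k * c w i)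
   + c u k * (c v i * c w j - c v j * c w i)"

definition e4 :: "nat \<Rightarrow> nat \<Rightarrow> nat \<Rightarrow> nat \<Rightarrow> vec7 \<Rightarrow> vec7 \<Rightarrow> vec7 \<Rightarrow> vec7 \<Rightarrow> real" where
  "e4 i j k l a b d f =
     c a i * e3 j k l b d f - c a j * e3 i k l b d f
   + c a k * e3 i j l b d f - c a l * e3 i j k b d f"

definition phi :: "vec7 \<Rightarrow> vec7 \<Rightarrow> vec7 \<Rightarrow> real" where
  "phi u v w = e3 1 2 3 u v w - e3 1 6 7 u v w - e3 5 2 7 u v w - e3 5 6 3 u v w
             - e3 4 1 5 u v w - e3 4 2 6 u v w - e3 4 3 7 u v w"

definition psi :: "vec7 \<Rightarrow> vec7 \<Rightarrow> vec7 \<Rightarrow> vec7 \<Rightarrow> real" where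
  "psi a b d f = e4 4 5 6 7 a b d f - e4 4 5 2 3 a b d f - e4 4 1 6 3 a b d f
               - e4 4 1 2 7 a b d f - e4 2 6 3 7 a b d f - e4 1 5 3 7 a b d f
               - e4 1 5 2 6 a b d f"

definition cross :: "vec7 \<Rightarrow> vec7 \<Rightarrow> vec7" where
  "cross u v = (\<chi> i. phi u v (axis i 1))"

definition associative :: "vec7 set \<Rightarrow> bool" where
  "associative P \<longleftrightarrow> subspace P \<and> dim P = 3 \<and> (\<forall>u\<in>P. \<forall>v\<in>P. cross u v \<in> P)"

definition wedge :: "vec7 \<Rightarrow> vec7 \<Rightarrow> form2" where
  "wedge u v = (\<lambda>a b. (u \<bullet> a) * (v \<bullet> b) - (u \<bullet> b) * (v \<bullet> a))"

definition hook :: "vec7 \<Rightarrow> form2" where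
  "hook u = (\<lambda>a b. phi u a b)"

definition Psi2 :: "vec7 \<Rightarrow> vec7 \<Rightarrow> form2" where
  "Psi2 u v = (\<lambda>a b. psi u v a b)"

text \<open>A 2-form is identified with its coefficient matrix (bilinear forms on R^7 are
  determined by their values on basis vectors); linear spans are taken there.\<close>
definition fmat :: "form2 \<Rightarrow> real ^ 7 ^ 7" where
  "fmat w = (\<chi> i j. w (axis i 1) (axis j 1))"

definition Lambda2_7 :: "(real ^ 7 ^ 7) set" where
  "Lambda2_7 = {fmat (hook u) | u. True}"

definition Lambda2P :: "vec7 set \<Rightarrow> (real ^ 7 ^ 7) set" where
  "Lambda2P P = span {fmat (wedge u v) | u v. u \<in> P \<and> v \<in> P}"

definition PsiP :: "vec7 set \<Rightarrow> (real ^ 7 ^ 7) set" where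
  "PsiP P = span {fmat (Psi2 u v) | u v. u \<in> P \<and> v \<in> P}"

definition Theta :: "vec7 set \<Rightarrow> (real ^ 7 ^ 7) set" where
  "Theta P = {x + y | x y. x \<in> Lambda2P P \<and> y \<in> PsiP P}"

end

theory Submission
  imports Defs
begin


lemma exhaust_7: fixes x :: 7 shows "x = 0 \<or> x = 1 \<or> x = 2 \<or> x = 3 \<or> x = 4 \<or> x = 5 \<or> x = 6"
proof (induct x)
  case (of_int z)
  then have "0 \<le> z" "z < 7" by simp_all
  then have "z = 0 \<or> z = 1 \<or> z = 2 \<or> z = 3 \<or> z = 4 \<or> z = 5 \<or> z = 6" by linarith
  then show ?case by (elim disjE) simp_all
qed

lemma UNIV7: "(UNIV::7 set) = {0,1,2,3,4,5,6}" using exhaust_7 by blast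

lemma sum7: "(\<Sum>i\<in>UNIV. f i) = f (0::7) + (f 1 + (f 2 + (f 3 + (f 4 + (f 5 + (f 6::'a::comm_monoid_add))))))"
  unfolding UNIV7 by (subst sum.insert, simp, simp)+ simp

lemma inner7: "(u::vec7) \<bullet> v = u$0 * v$0 + u$1 * v$1 + u$2 * v$2 + u$3 * v$3 + u$4 * v$4 + u$5 * v$5 + u$6 * v$6"
  unfolding inner_vec_def sum7 by (simp add: add.assoc)

lemma c_simps: "c x 1 = x$0" "c x 2 = x$1" "c x 3 = x$2" "c x 4 = x$3" "c x 5 = x$4" "c x 6 = x$5" "c x 7 = x$6" "c x (Suc 0) = x$0"
  by (simp_all add: c_def ix_def)

lemma vec7_eqI:
  fixes x y :: "'a ^ 7"
  assumes "x$0 = y$0" "x$1 = y$1" "x$2 = y$2" "x$3 = y$3" "x$4 = y$4" "x$5 = y$5" "x$6 = y$6"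
  shows "x = y"
proof (rule iffD2[OF vec_eq_iff], rule allI)
  fix i :: 7
  from exhaust_7[of i] show "x$i = y$i" by (elim disjE) (simp_all add: assms)
qed

lemma cross_comp:
  "cross u v $ 0 = u $ 1* v $ 2 - u $ 2* v $ 1 + u $ 3* v $ 4 - u $ 4* v $ 3 - u $ 5* v $ 6 + u $ 6* v $ 5"
  "cross u v $ 1 = - u $ 0* v $ 2 + u $ 2* v $ 0 + u $ 3* v $ 5 + u $ 4* v $ 6 - u $ 5* v $ 3 - u $ 6* v $ 4"
  "cross u v $ 2 = u $ 0* v $ 1 - u $ 1* v $ 0 + u $ 3* v $ 6 - u $ 4* v $ 5 + u $ 5* v $ 4 - u $ 6* v $ 3"
  "cross u v $ 3 = - u $ 0* v $ 4 - u $ 1* v $ 5 - u $ 2* v $ 6 + u $ 4* v $ 0 + u $ 5* v $ 1 + u $ 6* v $ 2"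
  "cross u v $ 4 = u $ 0* v $ 3 - u $ 1* v $ 6 + u $ 2* v $ 5 - u $ 3* v $ 0 - u $ 5* v $ 2 + u $ 6* v $ 1"
  "cross u v $ 5 = u $ 0* v $ 6 + u $ 1* v $ 3 - u $ 2* v $ 4 - u $ 3* v $ 1 + u $ 4* v $ 2 - u $ 6* v $ 0"
  "cross u v $ 6 = - u $ 0* v $ 5 + u $ 1* v $ 4 + u $ 2* v $ 3 - u $ 3* v $ 2 - u $ 4* v $ 1 + u $ 5* v $ 0"
  by (simp_all add: cross_def phi_def e3_def c_simps axis_def)


lemma phi_exp: "phi u v w = cross u v \<bullet> w"
  unfolding inner7 cross_comp by (simp add: phi_def e3_def c_simps algebra_simps)

lemma cross_add1: "cross (x + y) v = cross x v + cross y v"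
  by (rule vec7_eqI) (simp_all add: cross_comp algebra_simps)
lemma cross_add2: "cross u (x + y) = cross u x + cross u y"
  by (rule vec7_eqI) (simp_all add: cross_comp algebra_simps)
lemma cross_scale1: "cross (r *\<^sub>R x) v = r *\<^sub>R cross x v"
  by (rule vec7_eqI) (simp_all add: cross_comp algebra_simps)
lemma cross_scale2: "cross u (r *\<^sub>R x) = r *\<^sub>R cross u x"
  by (rule vec7_eqI) (simp_all add: cross_comp algebra_simps)
lemma cross_anti: "cross u v = - cross v u"
  by (rule vec7_eqI) (simp_all add: cross_comp algebra_simps)

lemma phi_cyc: "phi u v w = phi v w u"
  unfolding phi_exp inner7 cross_comp by (simp add: algebra_simps)

lemma cross_cross: "cross v (cross v u) = (v \<bullet> u) *\<^sub>R v - (v \<bullet> v) *\<^sub>R u"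
  by (rule vec7_eqI) (simp_all add: cross_comp inner7 algebra_simps)

lemma cross_cross2: "cross (cross u v) a + cross u (cross v a) = (2 * (u \<bullet> a)) *\<^sub>R v - (v \<bullet> a) *\<^sub>R u - (u \<bullet> v) *\<^sub>R a"
  by (rule vec7_eqI) (simp_all add: cross_comp inner7 algebra_simps)



lemma lin_expand:
  fixes f :: "vec7 \<Rightarrow> real"
  assumes "linear f"
  shows "f z = (\<Sum>k\<in>UNIV. z$k * f (axis k 1))"
proof -
  have "f z = f (\<Sum>k\<in>UNIV. z$k *\<^sub>R axis k 1)"
    using basis_expansion[of z] by (simp add: scalar_mult_eq_scaleR)
  also have "\<dots> = (\<Sum>k\<in>UNIV. z$k * f (axis k 1))"
    by (simp add: linear_sum[OF assms] linear_scale[OF assms])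
  finally show ?thesis .
qed

lemma c_add: "c (x + y) i = c x i + c y i" by (simp add: c_def)
lemma c_scale: "c (r *\<^sub>R x) i = r * c x i" by (simp add: c_def)
lemma e3_lin: "linear (e3 i j k u v)"
  by (rule linearI) (simp_all add: e3_def c_add c_scale algebra_simps)
lemma e4_lin: "linear (e4 i j k l a b d)"
  by (rule linearI) (simp_all add: e4_def linear_add[OF e3_lin] linear_scale[OF e3_lin] algebra_simps)
lemma psi_lin: "linear (psi u v w)"
  by (rule linearI) (simp_all add: psi_def linear_add[OF e4_lin] linear_scale[OF e4_lin] algebra_simps)

lemma psi_vec: "(\<chi> k. psi u v w (axis k 1)) = cross u (cross v w) + (u \<bullet> v) *\<^sub>R w - (u \<bullet> w) *\<^sub>R v"
  by (rule vec7_eqI) (simp_all add: psi_def e4_def e3_def c_simps axis_def cross_comp inner7 algebra_simps)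

lemma id4: "psi u v w z = cross u (cross v w) \<bullet> z + (u \<bullet> v) * (w \<bullet> z) - (u \<bullet> w) * (v \<bullet> z)"
proof -
  define X where "X = cross u (cross v w) + (u \<bullet> v) *\<^sub>R w - (u \<bullet> w) *\<^sub>R v"
  have "psi u v w z = (\<Sum>k\<in>UNIV. z$k * psi u v w (axis k 1))" by (rule lin_expand[OF psi_lin])
  also have "\<dots> = (\<Sum>k\<in>UNIV. z$k * X$k)"
    unfolding X_def psi_vec[symmetric] by simp
  also have "\<dots> = X \<bullet> z" by (simp add: inner_vec_def mult.commute)
  finally show ?thesis unfolding X_def by (simp add: inner_add_left inner_diff_left)
qed

lemma id3: "phi (cross u v) x y = wedge u v x y - psi u v x y"
proof -
  have "phi (cross u v) x y = cross (cross u v) x \<bullet> y" by (simp add: phi_exp)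
  also have "cross (cross u v) x = (2 * (u \<bullet> x)) *\<^sub>R v - (v \<bullet> x) *\<^sub>R u - (u \<bullet> v) *\<^sub>R x - cross u (cross v x)"
    using cross_cross2[of u v x] by (simp add: algebra_simps)
  finally show ?thesis by (simp add: id4 wedge_def inner_diff_left algebra_simps inner_commute)
qed

lemma cross_sq: "cross q a \<bullet> cross q a = (q \<bullet> q) * (a \<bullet> a) - (q \<bullet> a) * (q \<bullet> a)"
proof -
  have "cross q a \<bullet> cross q a = phi q a (cross q a)" by (simp add: phi_exp)
  also have "\<dots> = phi (cross q a) q a" using phi_cyc by metis
  also have "\<dots> = cross (cross q a) q \<bullet> a" by (simp add: phi_exp)
  also have "cross (cross q a) q = - cross q (cross q a)" by (rule cross_anti)
  finally show ?thesis by (simp add: cross_cross inner_diff_left inner_diff_right inner_commute)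
qed

definition ev :: "real^7^7 \<Rightarrow> vec7 \<Rightarrow> vec7 \<Rightarrow> real" where
  "ev M a b = (\<Sum>i\<in>UNIV. \<Sum>j\<in>UNIV. a$i * b$j * M$i$j)"

lemma ev_add: "ev (M + N) a b = ev M a b + ev N a b"
  by (simp add: ev_def algebra_simps sum.distrib)
lemma ev_scale: "ev (r *\<^sub>R M) a b = r * ev M a b"
  by (simp add: ev_def algebra_simps sum_distrib_left)
lemma ev_zero: "ev 0 a b = 0"
  by (simp add: ev_def)

lemma ev_span:
  assumes "M \<in> span S" "\<And>N. N \<in> S \<Longrightarrow> ev N a b = 0"
  shows "ev M a b = 0"
  using assms(1)
proof (induct rule: span_induct_alt)
  case base then show ?case by (rule ev_zero)
next
  case (step r x y) then show ?case by (simp add: ev_add ev_scale assms(2))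
qed

lemma ev_fmat:
  assumes "bilinear f"
  shows "ev (fmat f) a b = f a b"
proof -
  have l1: "linear (\<lambda>x. f x b)" for b using assms by (simp add: bilinear_def)
  have l2: "linear (f x)" for x using assms by (simp add: bilinear_def)
  have "f a b = (\<Sum>i\<in>UNIV. a$i * f (axis i 1) b)" by (rule lin_expand[OF l1])
  also have "\<dots> = (\<Sum>i\<in>UNIV. a$i * (\<Sum>j\<in>UNIV. b$j * f (axis i 1) (axis j 1)))"
  proof -
    have eq: "f (axis i 1) b = (\<Sum>j\<in>UNIV. b$j * f (axis i 1) (axis j 1))" for i
      by (rule lin_expand[OF l2])
    show ?thesis by (simp only: eq)
  qed
  also have "\<dots> = ev (fmat f) a b"
    by (simp add: ev_def fmat_def sum_distrib_left algebra_simps)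
  finally show ?thesis by simp
qed

lemma bilinI:
  fixes f :: "vec7 \<Rightarrow> vec7 \<Rightarrow> real"
  assumes "\<And>a a' b. f (a + a') b = f a b + f a' b" "\<And>r a b. f (r *\<^sub>R a) b = r * f a b"
    "\<And>a b b'. f a (b + b') = f a b + f a b'" "\<And>r a b. f a (r *\<^sub>R b) = r * f a b"
  shows "bilinear f"
  unfolding bilinear_def by (auto intro!: linearI simp: assms)

lemma bilin_hook: "bilinear (hook u)"
  by (rule bilinI) (simp_all add: hook_def phi_exp cross_add2 cross_scale2 inner_add_left inner_add_right)

lemma bilin_wedge: "bilinear (wedge u v)"
  by (rule bilinI) (simp_all add: wedge_def inner_add_left inner_add_right algebra_simps)

lemma bilin_Psi2: "bilinear (Psi2 u v)"
  by (rule bilinI) (simp_all add: Psi2_def id4 cross_add2 cross_scale2 inner_add_left inner_add_right algebra_simps)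


lemma fmat_diff: "fmat (\<lambda>x y. f x y - g x y) = fmat f + (- fmat g)"
  unfolding fmat_def by (simp add: vec_eq_iff)

theorem lemma4p9:
  assumes "associative P"
  shows "Theta P \<inter> Lambda2_7 = {fmat (hook u) | u. u \<in> P}"
proof -
  have sub: "subspace P" and d3: "dim P = 3" and cl: "\<And>u v. u \<in> P \<Longrightarrow> v \<in> P \<Longrightarrow> cross u v \<in> P"
    using assms unfolding associative_def by auto
  have spanP: "span P = P" using sub by simp
  have inTheta: "fmat (hook u) \<in> Theta P" if uP: "u \<in> P" for u
  proof -
    have "span {u} \<subset> span P"
    proof
      show "span {u} \<subseteq> span P" using uP by (simp add: span_mono)
      show "span {u} \<noteq> span P"
      proof
        assume "span {u} = span P"
        then have "dim {u} = dim P" by (metis dim_span)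
        then show False using d3 by (simp split: if_splits)
      qed
    qed
    then obtain v where v: "v \<noteq> 0" "v \<in> span P" "\<And>y. y \<in> span {u} \<Longrightarrow> orthogonal v y"
      by (rule orthogonal_to_subspace_exists_gen) blast
    have vP: "v \<in> P" using v spanP by simp
    have vu: "v \<bullet> u = 0" using v(3)[of u] by (simp add: orthogonal_def span_base)
    have vv: "v \<bullet> v \<noteq> 0" using v(1) by simp
    define a where "a = (- 1 / (v \<bullet> v)) *\<^sub>R v"
    define w where "w = cross v u"
    have aP: "a \<in> P" unfolding a_def using subspace_scale[OF sub vP] by blast
    have wP: "w \<in> P" unfolding w_def using cl vP uP by simp
    have "cross a w = (- 1 / (v \<bullet> v)) *\<^sub>R cross v (cross v u)"
      unfolding a_def w_def by (simp only: cross_scale1)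
    also have "\<dots> = u" using vu vv by (simp add: cross_cross)
    finally have awu: "cross a w = u" .
    have "hook u = (\<lambda>x y. wedge a w x y - Psi2 a w x y)"
      unfolding hook_def Psi2_def awu[symmetric] by (intro ext) (simp add: id3)
    then have "fmat (hook u) = fmat (wedge a w) + (- fmat (Psi2 a w))"
      by (simp add: fmat_diff)
    moreover have "fmat (wedge a w) \<in> Lambda2P P" unfolding Lambda2P_def using aP wP by (intro span_base) blast
    moreover have "- fmat (Psi2 a w) \<in> PsiP P" unfolding PsiP_def using aP wP by (intro span_neg span_base) blast
    ultimately show ?thesis unfolding Theta_def by blast
  qed
  have vanish: "ev M a b = 0" if MT: "M \<in> Theta P" and aP: "a \<in> P" and bp: "\<And>p. p \<in> P \<Longrightarrow> p \<bullet> b = 0" for M a b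
  proof -
    from MT obtain x y where M: "M = x + y" "x \<in> Lambda2P P" "y \<in> PsiP P" unfolding Theta_def by blast
    have "ev x a b = 0"
      using M(2) unfolding Lambda2P_def
    proof (rule ev_span)
      fix N assume "N \<in> {fmat (wedge u v) |u v. u \<in> P \<and> v \<in> P}"
      then obtain u v where N: "N = fmat (wedge u v)" "u \<in> P" "v \<in> P" by blast
      have "ev N a b = wedge u v a b" using N(1) by (simp add: ev_fmat bilin_wedge)
      then show "ev N a b = 0" using bp[of u] bp[of v] N by (simp add: wedge_def)
    qed
    moreover have "ev y a b = 0"
      using M(3) unfolding PsiP_def
    proof (rule ev_span)
      fix N assume "N \<in> {fmat (Psi2 u v) |u v. u \<in> P \<and> v \<in> P}"
      then obtain u v where N: "N = fmat (Psi2 u v)" "u \<in> P" "v \<in> P" by blast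
      have "cross u (cross v a) \<in> P" using cl N aP by simp
      moreover have "ev N a b = Psi2 u v a b" using N(1) by (simp add: ev_fmat bilin_Psi2)
      ultimately show "ev N a b = 0" using N aP bp[of u] bp[of v] bp[of a] bp[of "cross u (cross v a)"]
        by (simp add: Psi2_def id4)
    qed
    ultimately show ?thesis using M(1) by (simp add: ev_add)
  qed
  have P_ne: "\<exists>a\<in>P. a \<noteq> 0"
  proof (rule ccontr)
    assume "\<not> ?thesis" then have "P \<subseteq> {0}" by auto
    then have "dim P = 0" by simp
    with d3 show False by simp
  qed
  then obtain a0 where a0: "a0 \<in> P" "a0 \<noteq> 0" by blast
  show ?thesis
  proof (rule set_eqI, rule iffI)
    fix M assume "M \<in> Theta P \<inter> Lambda2_7"
    then obtain w where MT: "M \<in> Theta P" and Mw: "M = fmat (hook w)" unfolding Lambda2_7_def by blast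
    obtain p q where pq: "p \<in> span P" "\<And>x. x \<in> span P \<Longrightarrow> orthogonal q x" "w = p + q"
      by (rule orthogonal_subspace_decomp_exists[of P w]) blast
    have pP: "p \<in> P" using pq(1) spanP by simp
    have qP: "q \<bullet> x = 0" if "x \<in> P" for x using pq(2)[of x] that spanP by (simp add: orthogonal_def)
    define b where "b = cross q a0"
    have bperp: "p' \<bullet> b = 0" if "p' \<in> P" for p'
    proof -
      have "p' \<bullet> b = cross q a0 \<bullet> p'" by (simp add: b_def inner_commute)
      also have "\<dots> = phi q a0 p'" by (simp add: phi_exp)
      also have "\<dots> = phi a0 p' q" by (rule phi_cyc)
      also have "\<dots> = cross a0 p' \<bullet> q" by (simp add: phi_exp)
      also have "\<dots> = 0" using qP[of "cross a0 p'"] cl a0(1) that by (simp add: inner_commute)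
      finally show ?thesis .
    qed
    have "ev M a0 b = 0" using vanish[OF MT a0(1) bperp] .
    moreover have "ev M a0 b = hook w a0 b" using Mw by (simp add: ev_fmat bilin_hook)
    ultimately have "phi w a0 b = 0" by (simp add: hook_def)
    moreover have "phi p a0 b = 0" using bperp[of "cross p a0"] cl pP a0(1) by (simp add: phi_exp inner_commute)
    moreover have "phi w a0 b = phi p a0 b + phi q a0 b" using pq(3) by (simp add: phi_exp cross_add1 inner_add_left)
    ultimately have "phi q a0 b = 0" by simp
    then have "cross q a0 \<bullet> cross q a0 = 0" by (simp add: phi_exp b_def)
    then have "(q \<bullet> q) * (a0 \<bullet> a0) = 0" using qP[of a0] a0(1) by (simp add: cross_sq)
    then have "q = 0" using a0(2) by simp
    then have "w \<in> P" using pq(3) pP by simp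
    then show "M \<in> {fmat (hook u) |u. u \<in> P}" using Mw by blast
  next
    fix M assume "M \<in> {fmat (hook u) |u. u \<in> P}"
    then obtain u where "u \<in> P" "M = fmat (hook u)" by blast
    then show "M \<in> Theta P \<inter> Lambda2_7" using inTheta unfolding Lambda2_7_def by blast
  qed
qed


end
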